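(* Let $\mathbf{A}\in\mathbb{R}^{m\times n}$ have rows $\mathbf{a}_1^\mathsf{T},\dots,\mathbf{a}_m^\mathsf{T}$ and let $\lambda>\max_l\|\mathbf{a}_l\|_\infty$. Then every stationary point $\hat{\boldsymbol{x}}$ of $$\text{(P}_\lambda\text{)}\quad \min_{\boldsymbol{x}\in[-1,1]^n}\ \max_{l\in\{1,\dots,m\}}\mathbf{a}_l^\mathsf{T}\boldsymbol{x}-\lambda\|\boldsymbol{x}\|_1$$ satisfies $\hat{x}_i\in\{-1,0,1\}$ for all $i=1,\dots,n$.
   Context: A point $\hat{\boldsymbol{x}}\in[-1,1]^n$ is a stationary point of (P$_\lambda$) if there exist $\mathbf{u},\mathbf{v}\in\mathbb{R}^n_{+}$ such that $\mathbf{0}\in\partial\big(\max_l\mathbf{a}_l^\mathsf{T}\hat{\boldsymbol{x}}\big)-\lambda\,\partial\|\hat{\boldsymbol{x}}\|_1-\mathbf{u}+\mathbf{v}$ and $u_i(\hat{x}_i+1)=0$, $v_i(\hat{x}_i-1)=0$ for all $i$, where $\partial$ denotes the convex subdifferential of the convex functions $\boldsymbol{x}\mapsto\max_l\mathbf{a}_l^\mathsf{T}\boldsymbol{x}$ and $\boldsymbol{x}\mapsto\|\boldsymbol{x}\|_1$ (a set sum/difference of sets). *)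

theory Defs
  imports "HOL-Analysis.Analysis"
begin

definition subdifferential :: "('a::real_inner \<Rightarrow> real) \<Rightarrow> 'a \<Rightarrow> 'a set" where
  "subdifferential f x = {g. \<forall>y. f x + inner g (y - x) \<le> f y}"

definition l1norm :: "real^'n \<Rightarrow> real" where
  "l1norm x = (\<Sum>i\<in>UNIV. \<bar>x $ i\<bar>)"

definition max_row :: "real^'n^'m \<Rightarrow> real^'n \<Rightarrow> real" where
  "max_row A x = Max (range (\<lambda>l. (A $ l) \<bullet> x))"

text \<open>Stationary point of (P_lambda): min over [-1,1]^n of max_l a_l^T x - lambda ||x||_1.\<close>
definition stationary_point :: "real^'n^'m \<Rightarrow> real \<Rightarrow> real^'n \<Rightarrow> bool" where
  "stationary_point A lam x \<longleftrightarrow>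
     (\<forall>i. -1 \<le> x $ i \<and> x $ i \<le> 1) \<and>
     (\<exists>u v :: real^'n. (\<forall>i. 0 \<le> u $ i \<and> 0 \<le> v $ i) \<and>
        0 \<in> {g - lam *\<^sub>R h - u + v | g h. g \<in> subdifferential (max_row A) x \<and> h \<in> subdifferential l1norm x} \<and>
        (\<forall>i. u $ i * (x $ i + 1) = 0 \<and> v $ i * (x $ i - 1) = 0))"

end

theory Submission
  imports Defs
begin

lemma l1_axis: "l1norm (x + axis i t) = l1norm x + (\<bar>x$i + t\<bar> - \<bar>x$i\<bar>)"
proof -
  have "l1norm (x + axis i t) - l1norm x = (\<Sum>j\<in>UNIV. (if j = i then \<bar>x$i + t\<bar> - \<bar>x$i\<bar> else 0))"
    unfolding l1norm_def sum_subtractf[symmetric]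
    by (rule sum.cong) (auto simp: axis_def)
  also have "\<dots> = \<bar>x$i + t\<bar> - \<bar>x$i\<bar>" by simp
  finally show ?thesis by simp
qed

lemma maxrow_axis:
  fixes A :: "real^'n^'m"
  assumes M: "\<And>l. infnorm (A $ l) \<le> M"
  shows "max_row A (x + axis i t) \<le> max_row A x + \<bar>t\<bar> * M"
  unfolding max_row_def
proof (rule Max.boundedI)
  show "finite (range (\<lambda>l. A $ l \<bullet> (x + axis i t)))" by simp
  show "range (\<lambda>l. A $ l \<bullet> (x + axis i t)) \<noteq> {}" by simp
  fix a assume "a \<in> range (\<lambda>l. A $ l \<bullet> (x + axis i t))"
  then obtain l where a: "a = A $ l \<bullet> (x + axis i t)" by auto
  have "a = A $ l \<bullet> x + (A $ l) $ i * t" by (simp add: a inner_add_right inner_axis)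
  also have "(A $ l) $ i * t \<le> \<bar>t\<bar> * M"
  proof -
    have "(A $ l) $ i * t \<le> \<bar>(A $ l) $ i\<bar> * \<bar>t\<bar>" by (metis abs_ge_self abs_mult)
    also have "\<dots> \<le> M * \<bar>t\<bar>"
      using component_le_infnorm_cart[of "A $ l" i] M[of l] by (intro mult_right_mono) auto
    finally show ?thesis by (simp add: mult.commute)
  qed
  moreover have "A $ l \<bullet> x \<le> Max (range (\<lambda>l. A $ l \<bullet> x))" by (rule Max_ge) auto
  ultimately show "a \<le> Max (range (\<lambda>l. A $ l \<bullet> x)) + \<bar>t\<bar> * M" by linarith
qed

theorem theorem6:
  fixes A :: "real^'n^'m" and lam :: real and x :: "real^'n"
  assumes "lam > Max (range (\<lambda>l. infnorm (A $ l)))"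
    and "stationary_point A lam x"
  shows "\<forall>i. x $ i \<in> {-1, 0, 1}"
proof (rule allI, rule ccontr)
  fix i
  assume nin: "x $ i \<notin> {-1, 0, 1}"
  define M where "M = Max (range (\<lambda>l. infnorm (A $ l)))"
  have Mb: "\<And>l. infnorm (A $ l) \<le> M" unfolding M_def by (rule Max_ge) auto
  have M0: "0 \<le> M" using Mb[of undefined] infnorm_pos_le[of "A $ undefined"] by linarith
  have lamM: "lam > M" using assms(1) M_def by simp
  obtain u v :: "real^'n" and g h where
    box: "-1 \<le> x $ i" "x $ i \<le> 1" and
    gs: "g \<in> subdifferential (max_row A) x" and hs: "h \<in> subdifferential l1norm x" and
    eq: "0 = g - lam *\<^sub>R h - u + v" and
    cu: "u $ i * (x $ i + 1) = 0" and cv: "v $ i * (x $ i - 1) = 0"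
    using assms(2) unfolding stationary_point_def by blast
  have "u $ i = 0" using cu nin by auto
  moreover have "v $ i = 0" using cv nin by auto
  ultimately have gi: "g $ i = lam * h $ i"
    using arg_cong[OF eq, of "\<lambda>z. z $ i"] by simp
  have gb: "\<bar>g $ i\<bar> \<le> M"
  proof -
    have "\<And>t. g $ i * t \<le> \<bar>t\<bar> * M"
    proof -
      fix t
      have "max_row A x + g \<bullet> (x + axis i t - x) \<le> max_row A (x + axis i t)"
        using gs unfolding subdifferential_def by blast
      moreover have "g \<bullet> (x + axis i t - x) = g $ i * t" by (simp add: inner_axis)
      ultimately show "g $ i * t \<le> \<bar>t\<bar> * M" using maxrow_axis[OF Mb, of x i t] by linarith
    qed
    from this[of 1] this[of "-1"] show ?thesis by auto
  qed
  have hb: "\<bar>h $ i\<bar> \<ge> 1"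
  proof -
    have *: "\<And>t. h $ i * t \<le> \<bar>x$i + t\<bar> - \<bar>x$i\<bar>"
    proof -
      fix t
      have "l1norm x + h \<bullet> (x + axis i t - x) \<le> l1norm (x + axis i t)"
        using hs unfolding subdifferential_def by blast
      moreover have "h \<bullet> (x + axis i t - x) = h $ i * t" by (simp add: inner_axis)
      ultimately show "h $ i * t \<le> \<bar>x$i + t\<bar> - \<bar>x$i\<bar>" using l1_axis[of x i t] by linarith
    qed
    from *[of "- x$i"] have "h $ i * x $ i \<ge> \<bar>x $ i\<bar>" by simp
    moreover have "x $ i \<noteq> 0" using nin by auto
    ultimately have "\<bar>x $ i\<bar> \<le> \<bar>h $ i\<bar> * \<bar>x $ i\<bar>" "\<bar>x $ i\<bar> > 0"
      by (auto simp: abs_mult[symmetric])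
    thus ?thesis by simp
  qed
  have "\<bar>g $ i\<bar> = lam * \<bar>h $ i\<bar>" using gi lamM M0 by (simp add: abs_mult)
  also have "\<dots> \<ge> lam" using hb lamM M0 by simp
  finally show False using gb lamM by linarith
qed

end
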